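(* Let $0<A<B$ and $h(t)=t\left(\frac{3-t}{2}\right)^2$. For $x>B/3$ define $$\rho(x)=\frac{\min\{h(t):t\in[A/x,B/x]\}}{\max\{h(t):t\in[A/x,B/x]\}} .$$ Then $\rho$ attains its maximum over $x\in(B/3,\infty)$ at $x=\frac13\left(A+\sqrt{AB}+B\right)$.
   Context: Interpretation: if a Gabor frame operator $S$ has spectrum $[A,B]$ and is rescaled to $S/x$, one step of the iteration $\gamma\mapsto\frac32\gamma-\frac12S_\gamma\gamma$ (with $S_\gamma$ the frame operator of $(\gamma,a,b)$) maps the spectrum via $h$, and $\rho(x)$ is the resulting ratio of smallest to largest frame bound. *)

theory Defs
  imports "HOL-Analysis.Analysis"
begin

definition hfun :: "real \<Rightarrow> real" where
  "hfun t = t * ((3 - t) / 2)^2"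

text \<open>Ratio of minimum to maximum of h over [A/x, B/x]; h is continuous so
  Inf/Sup over the compact interval are the min/max.\<close>
definition rho :: "real \<Rightarrow> real \<Rightarrow> real \<Rightarrow> real" where
  "rho A B x = (INF t\<in>{A/x..B/x}. hfun t) / (SUP t\<in>{A/x..B/x}. hfun t)"

end

theory Submission
  imports Defs
begin

lemma h_diff: "hfun (t::real) - hfun s = (t - s) * (t^2 + t * s + s^2 - 6 * t - 6 * s + 9) / 4"
  unfolding hfun_def by (simp add: field_simps power2_eq_square)

lemma h_mono01: assumes "0 \<le> s" "s \<le> t" "t \<le> 1" shows "hfun s \<le> hfun t"
proof -
  have "t^2 + t * s + s^2 - 6 * t - 6 * s + 9 \<ge> 0"
  proof -
    have "t^2 + t * s + s^2 - 6 * t - 6 * s + 9 = 3*(1-t)+3*(1-s)+(1-t)^2+(1-t)*(1-s)+(1-s)^2"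
      by (simp add: power2_eq_square algebra_simps)
    moreover have "(1-t)*(1-s) \<ge> 0" using assms by simp
    ultimately show ?thesis using assms by (smt (verit) zero_le_power2)
  qed
  then have "(t - s) * (t^2 + t * s + s^2 - 6 * t - 6 * s + 9) / 4 \<ge> 0" using assms by simp
  then show ?thesis using h_diff[of t s] by linarith
qed

lemma h_anti13: assumes "1 \<le> s" "s \<le> t" "t \<le> 3" shows "hfun t \<le> hfun s"
proof -
  have "t^2 + t * s + s^2 - 6 * t - 6 * s + 9 \<le> 0"
  proof -
    have e: "t^2 + t * s + s^2 - 6 * t - 6 * s + 9 = (t-1)*(t-3)+(s-1)*(s-3)+((t-2)*(s-2) - 1)"
      by (simp add: power2_eq_square algebra_simps)
    have "\<bar>(t-2)*(s-2)\<bar> \<le> 1" unfolding abs_mult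
      using assms by (intro mult_le_one) auto
    moreover have "(t-1)*(t-3) \<le> 0" "(s-1)*(s-3) \<le> 0" using assms
      by (auto simp: mult_nonneg_nonpos)
    ultimately show ?thesis unfolding e by linarith
  qed
  then have "(t - s) * (t^2 + t * s + s^2 - 6 * t - 6 * s + 9) / 4 \<le> 0" using assms
    by (simp add: mult_nonneg_nonpos)
  then show ?thesis using h_diff[of t s] by linarith
qed

lemma h_nonneg: "0 \<le> t \<Longrightarrow> 0 \<le> hfun t"
  unfolding hfun_def by simp

lemma h_pos: "0 < t \<Longrightarrow> t < 3 \<Longrightarrow> 0 < hfun t"
  unfolding hfun_def by simp

lemma h_le1: assumes "0 \<le> t" "t \<le> 4" shows "hfun t \<le> 1"
proof -
  have "1 - hfun t = (t - 1)^2 * (4 - t) / 4" unfolding hfun_def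
    by (simp add: field_simps power2_eq_square)
  moreover have "(t - 1)^2 * (4 - t) / 4 \<ge> 0" using assms by simp
  ultimately show ?thesis by linarith
qed

lemma rho_le:
  assumes "0 < a" "a \<le> b" "b \<le> 3" "t \<in> {a..b}" "s \<in> {a..b}" "0 < hfun s"
  shows "(INF u\<in>{a..b}. hfun u) / (SUP u\<in>{a..b}. hfun u) \<le> hfun t / hfun s"
proof -
  have bb: "bdd_below (hfun ` {a..b})"
    using assms(1) by (intro bdd_belowI2[where m="0::real"]) (auto intro: h_nonneg)
  have ba: "bdd_above (hfun ` {a..b})"
    using assms(1,3) by (intro bdd_aboveI2[where M="1::real"]) (auto intro: h_le1)
  have i0: "0 \<le> (INF u\<in>{a..b}. hfun u)"
    using assms(1,2) by (intro cINF_greatest) (auto intro: h_nonneg)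
  have it: "(INF u\<in>{a..b}. hfun u) \<le> hfun t" using bb assms(4) by (rule cINF_lower)
  have ss: "hfun s \<le> (SUP u\<in>{a..b}. hfun u)" by (rule cSUP_upper[OF assms(5) ba])
  have "(INF u\<in>{a..b}. hfun u) / (SUP u\<in>{a..b}. hfun u) \<le> (INF u\<in>{a..b}. hfun u) / hfun s"
    using i0 ss assms(6) by (intro divide_left_mono) auto
  also have "\<dots> \<le> hfun t / hfun s" using it assms(6) by (intro divide_right_mono) auto
  finally show ?thesis .
qed

lemma h_prod:
  assumes "0 \<le> r" "0 \<le> b" "r * b \<le> 3" "0 \<le> (1 - r) * (1 - b)"
  shows "hfun (r * b) \<le> hfun r * hfun b"
proof -
  have e: "(3 - r) * (3 - b) / 2 - (3 - r * b) = 3 * ((1 - r) * (1 - b)) / 2"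
    by (simp add: field_simps)
  have "(3 - r * b)^2 \<le> ((3 - r) * (3 - b) / 2)^2"
    using assms e by (intro power_mono) linarith+
  then have "(r * b / 4) * (3 - r * b)^2 \<le> (r * b / 4) * ((3 - r) * (3 - b) / 2)^2"
    using assms by (intro mult_left_mono) auto
  then show ?thesis unfolding hfun_def by (simp add: power2_eq_square field_simps)
qed

theorem mainTheorem10:
  fixes A B :: real
  assumes "0 < A" and "A < B"
  defines "x0 \<equiv> (A + sqrt (A * B) + B) / 3"
  shows "x0 > B / 3 \<and> (\<forall>x. x > B / 3 \<longrightarrow> rho A B x \<le> rho A B x0)"
proof -
  define s where "s = sqrt (A * B)"
  have s2: "s^2 = A * B" unfolding s_def using assms by simp
  have "sqrt (A*A) < sqrt (A*B)" "sqrt (A*B) < sqrt (B*B)" using assms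
    by (intro real_sqrt_less_mono; simp)+
  moreover have "sqrt (A*A) = A" "sqrt (B*B) = B" using assms by simp_all
  ultimately have sA: "A < s" "s < B" unfolding s_def using assms by simp_all
  have x0s: "3 * x0 = A + s + B" unfolding x0_def s_def by simp
  have x0A: "A < x0" and x0B: "x0 < B" using x0s sA by linarith+
  have x0p: "0 < x0" using x0A assms by linarith
  have part1: "x0 > B / 3" using x0s sA assms by linarith
  define a0 where "a0 = A / x0"
  define b0 where "b0 = B / x0"
  have a0p: "0 < a0" unfolding a0_def using assms x0p by simp
  have a01: "a0 < 1" unfolding a0_def using x0A x0p by simp
  have b01: "1 < b0" unfolding b0_def using x0B x0p by simp
  have b03: "b0 < 3" unfolding b0_def using part1 x0p by (simp add: field_simps)
  have q0: "a0^2 + a0 * b0 + b0^2 - 6 * a0 - 6 * b0 + 9 = 0"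
  proof -
    have "a0^2 + a0 * b0 + b0^2 - 6 * a0 - 6 * b0 + 9
        = (A^2 + A * B + B^2 - 2 * (A + B) * (3 * x0) + (3 * x0)^2) / x0^2"
      unfolding a0_def b0_def using x0p by (simp add: field_simps power2_eq_square)
    also have "A^2 + A * B + B^2 - 2 * (A + B) * (3 * x0) + (3 * x0)^2 = 0"
      unfolding x0s using s2 by (simp add: power2_eq_square algebra_simps)
    finally show ?thesis by simp
  qed
  have hab: "hfun a0 = hfun b0" using h_diff[of a0 b0] q0 by simp
  have rho0: "rho A B x0 = hfun a0"
  proof -
    have bb: "bdd_below (hfun ` {a0..b0})"
      using a0p by (intro bdd_belowI2[where m="0::real"]) (auto intro: h_nonneg)
    have ba: "bdd_above (hfun ` {a0..b0})"
      using a0p b03 by (intro bdd_aboveI2[where M="1::real"]) (auto intro: h_le1)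
    have "(INF u\<in>{a0..b0}. hfun u) = hfun a0"
    proof (rule antisym)
      show "(INF u\<in>{a0..b0}. hfun u) \<le> hfun a0"
        using a01 b01 by (intro cINF_lower[OF bb]) auto
      show "hfun a0 \<le> (INF u\<in>{a0..b0}. hfun u)"
      proof (rule cINF_greatest)
        show "{a0..b0} \<noteq> {}" using a01 b01 by auto
        fix t assume t: "t \<in> {a0..b0}"
        show "hfun a0 \<le> hfun t"
        proof (cases "t \<le> 1")
          case True then show ?thesis using t a0p by (intro h_mono01) auto
        next
          case False then show ?thesis using t b03 hab h_anti13[of t b0] by auto
        qed
      qed
    qed
    moreover have "(SUP u\<in>{a0..b0}. hfun u) = 1"
    proof (rule antisym)
      show "(SUP u\<in>{a0..b0}. hfun u) \<le> 1"
        using a0p b03 a01 b01 by (intro cSUP_least) (auto intro: h_le1)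
      have "hfun 1 \<le> (SUP u\<in>{a0..b0}. hfun u)"
        using a01 b01 by (intro cSUP_upper[OF _ ba]) auto
      then show "1 \<le> (SUP u\<in>{a0..b0}. hfun u)" by (simp add: hfun_def)
    qed
    ultimately show ?thesis unfolding rho_def a0_def b0_def by simp
  qed
  have h1: "hfun 1 = 1" by (simp add: hfun_def)
  have part2: "rho A B x \<le> hfun a0" if x: "x > B / 3" for x
  proof -
    have xp: "0 < x" using x assms by linarith
    define a where "a = A / x"
    define b where "b = B / x"
    have ap: "0 < a" unfolding a_def using xp assms by simp
    have ab: "a \<le> b" unfolding a_def b_def using xp assms by (simp add: divide_right_mono)
    have b3: "b < 3" unfolding b_def using x xp by (simp add: field_simps)
    have rr: "rho A B x = (INF u\<in>{a..b}. hfun u) / (SUP u\<in>{a..b}. hfun u)"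
      unfolding rho_def a_def b_def ..
    show ?thesis
    proof (cases "x < A")
      case True
      have a1: "1 < a" unfolding a_def using True xp by simp
      define R where "R = B / A"
      have bR: "b = R * a" unfolding R_def a_def b_def using assms by simp
      have Rb: "R \<le> b" unfolding R_def b_def using True xp assms
        by (intro divide_left_mono) auto
      have R1: "1 \<le> R" unfolding R_def using assms by simp
      have "rho A B x \<le> hfun b / hfun a"
        unfolding rr using ap ab b3 a1 by (intro rho_le h_pos) auto
      also have "\<dots> \<le> hfun R"
      proof -
        have "hfun b \<le> hfun R * hfun a" unfolding bR
          using R1 a1 b3 bR by (intro h_prod) (auto intro: mult_nonneg_nonneg mult_nonpos_nonpos)
        moreover have "0 < hfun a" using ap a1 ab b3 by (intro h_pos) auto
        ultimately show ?thesis by (simp add: divide_le_eq)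
      qed
      also have "\<dots> \<le> hfun b0"
      proof (rule h_anti13)
        show "1 \<le> b0" using b01 by simp
        show "b0 \<le> R" unfolding R_def b0_def using x0A assms by (intro divide_left_mono) auto
        show "R \<le> 3" using Rb b3 by simp
      qed
      finally show ?thesis using hab by simp
    next
      case notA: False
      show ?thesis
      proof (cases "x > B")
        case True
        have b1: "b < 1" unfolding b_def using True xp by simp
        define r where "r = A / B"
        have aR: "a = r * b" unfolding r_def a_def b_def using assms by simp
        have "rho A B x \<le> hfun a / hfun b"
          unfolding rr using ap ab b3 by (intro rho_le h_pos) auto
        also have "\<dots> \<le> hfun r"
        proof -
          have r1: "r \<le> 1" "0 \<le> r" unfolding r_def using assms by auto
          have "hfun a \<le> hfun r * hfun b" unfolding aR
            using r1 b1 ap ab aR by (intro h_prod) (auto intro: mult_nonneg_nonneg)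
          moreover have "0 < hfun b" using ap ab b3 by (intro h_pos) auto
          ultimately show ?thesis by (simp add: divide_le_eq)
        qed
        also have "\<dots> \<le> hfun a0"
        proof (rule h_mono01)
          show "0 \<le> r" unfolding r_def using assms by simp
          show "r \<le> a0" unfolding r_def a0_def using x0B x0p assms by (intro divide_left_mono) auto
          show "a0 \<le> 1" using a01 by simp
        qed
        finally show ?thesis .
      next
        case False
        have a1: "a \<le> 1" unfolding a_def using notA xp by simp
        have b1: "1 \<le> b" unfolding b_def using False xp by simp
        show ?thesis
        proof (cases "x \<ge> x0")
          case True
          have "rho A B x \<le> hfun a / hfun 1"
            unfolding rr using ap ab b3 a1 b1 by (intro rho_le h_pos) auto
          also have "\<dots> = hfun a" using h1 by simp
          also have "\<dots> \<le> hfun a0"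
          proof (rule h_mono01)
            show "0 \<le> a" using ap by simp
            show "a \<le> a0" unfolding a_def a0_def using True x0p assms by (intro divide_left_mono) auto
            show "a0 \<le> 1" using a01 by simp
          qed
          finally show ?thesis .
        next
          case False
          have "rho A B x \<le> hfun b / hfun 1"
            unfolding rr using ap ab b3 a1 b1 by (intro rho_le h_pos) auto
          also have "\<dots> = hfun b" using h1 by simp
          also have "\<dots> \<le> hfun b0"
          proof (rule h_anti13)
            show "1 \<le> b0" using b01 by simp
            show "b0 \<le> b" unfolding b_def b0_def using False xp assms by (intro divide_left_mono) auto
            show "b \<le> 3" using b3 by simp
          qed
          finally show ?thesis using hab by simp
        qed
      qed
    qed
  qed
  show ?thesis using part1 part2 rho0 by simp
qed

end
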